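(* Let $n\ge2$ and let $G$ be a finite simple graph with independence number $n$. Let $P_G(z)=I_G(z)-1$. If the Julia set $\mathcal{J}(P_G)$ (the independence fractal of $G$) is a circle, then $G=K_n^c$ (the graph on $n$ vertices with no edges) and the circle is $\{z\in\mathbb{C}: |z+1|=1\}$.
   Context: For a finite simple graph $G$, the independence polynomial is $I_G(z)=\sum_{i=0}^{\alpha} a_i z^i$, where $a_i$ is the number of sets of $i$ pairwise non-adjacent vertices and the independence number $\alpha$ is the largest such $i$. $P_G=I_G-1$ is the reduced independence polynomial. For a polynomial $P$ of degree at least two, the Julia set $\mathcal{J}(P)$ is the boundary of $\{z: (P^n(z))_{n>0}\text{ bounded}\}$. For $G\neq K_1$ the independence fractal $\mathcal{F}(G)$ of $G$ equals $\mathcal{J}(P_G)$. *)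

theory Defs
  imports "HOL-Analysis.Analysis" "HOL-Computational_Algebra.Polynomial"
begin

text \<open>A finite simple graph: finite vertex set V and a symmetric irreflexive
  adjacency relation E (only its restriction to V matters).\<close>
definition simple_graph :: "'a set \<Rightarrow> ('a \<Rightarrow> 'a \<Rightarrow> bool) \<Rightarrow> bool" where
  "simple_graph V E \<longleftrightarrow> finite V \<and> (\<forall>u v. E u v \<longrightarrow> E v u) \<and> (\<forall>v. \<not> E v v)"

definition independent_set :: "'a set \<Rightarrow> ('a \<Rightarrow> 'a \<Rightarrow> bool) \<Rightarrow> 'a set \<Rightarrow> bool" where
  "independent_set V E S \<longleftrightarrow> S \<subseteq> V \<and> (\<forall>u\<in>S. \<forall>v\<in>S. \<not> E u v)"

definition indep_count :: "'a set \<Rightarrow> ('a \<Rightarrow> 'a \<Rightarrow> bool) \<Rightarrow> nat \<Rightarrow> nat" where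
  "indep_count V E i = card {S. independent_set V E S \<and> card S = i}"

definition independence_number :: "'a set \<Rightarrow> ('a \<Rightarrow> 'a \<Rightarrow> bool) \<Rightarrow> nat" where
  "independence_number V E = Max {card S | S. independent_set V E S}"

definition indep_poly :: "'a set \<Rightarrow> ('a \<Rightarrow> 'a \<Rightarrow> bool) \<Rightarrow> complex poly" where
  "indep_poly V E = (\<Sum>i\<le>independence_number V E. monom (of_nat (indep_count V E i)) i)"

definition reduced_indep_poly :: "'a set \<Rightarrow> ('a \<Rightarrow> 'a \<Rightarrow> bool) \<Rightarrow> complex poly" where
  "reduced_indep_poly V E = indep_poly V E - 1"

definition filled_julia :: "complex poly \<Rightarrow> complex set" where
  "filled_julia P = {z. bounded (range (\<lambda>n. (poly P ^^ n) z))}"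

definition julia_set :: "complex poly \<Rightarrow> complex set" where
  "julia_set P = frontier (filled_julia P)"

end

theory Submission
  imports Defs
begin


lemma indep_fin: "simple_graph V E \<Longrightarrow> finite {S. independent_set V E S \<and> P S}"
  by (rule finite_subset[of _ "Pow V"]) (auto simp: simple_graph_def independent_set_def)

lemma indep_max: assumes "simple_graph V E"
  shows "\<exists>S. independent_set V E S \<and> card S = independence_number V E"
proof -
  have "{card S | S. independent_set V E S} = card ` {S. independent_set V E S \<and> True}" by auto
  hence fin: "finite {card S | S. independent_set V E S}" using indep_fin[OF assms, of "\<lambda>_. True"] by simp
  have "independent_set V E {}" by (simp add: independent_set_def)
  hence ne: "{card S | S. independent_set V E S} \<noteq> {}" by auto
  show ?thesis using Max_in[OF fin ne] unfolding independence_number_def by auto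
qed

lemma a0: "simple_graph V E \<Longrightarrow> indep_count V E 0 = 1"
proof -
  assume g: "simple_graph V E"
  have "{S. independent_set V E S \<and> card S = 0} = {{}}"
    using g by (auto simp: independent_set_def simple_graph_def dest: finite_subset)
  thus ?thesis by (simp add: indep_count_def)
qed

lemma a1: "simple_graph V E \<Longrightarrow> indep_count V E 1 = card V"
proof -
  assume g: "simple_graph V E"
  have "{S. independent_set V E S \<and> card S = 1} = (\<lambda>v. {v}) ` V"
    using g by (auto simp: independent_set_def simple_graph_def card_1_singleton_iff)
  moreover have "card ((\<lambda>v. {v}) ` V) = card V" by (rule card_image) (auto simp: inj_on_def)
  ultimately show ?thesis by (simp add: indep_count_def)
qed

lemma a_pos: assumes g: "simple_graph V E" and i: "i \<le> independence_number V E"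
  shows "indep_count V E i \<ge> 1"
proof -
  obtain S where S: "independent_set V E S" "card S = independence_number V E" using indep_max[OF g] by blast
  obtain T where T: "T \<subseteq> S" "card T = i" using obtain_subset_with_card_n[of i S] S i by auto
  have "independent_set V E T" using S T by (auto simp: independent_set_def)
  hence "T \<in> {S. independent_set V E S \<and> card S = i}" using T by auto
  hence "{S. independent_set V E S \<and> card S = i} \<noteq> {}" by blast
  hence "card {S. independent_set V E S \<and> card S = i} \<noteq> 0" using indep_fin[OF g] by simp
  thus ?thesis by (simp add: indep_count_def)
qed

lemma coeff_indep_poly: "coeff (indep_poly V E) i =
   (if i \<le> independence_number V E then of_nat (indep_count V E i) else 0)"
  unfolding indep_poly_def by (simp add: coeff_sum coeff_monom)

lemma coeff_lin_power: "coeff ([:a, 1:] ^ n) k = (if k \<le> n then of_nat (n choose k) * a ^ (n - k) else (0::'a::comm_ring_1))"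
proof -
  have "[:a, 1:] = monom 1 1 + [:a:]" by (simp add: monom_altdef)
  hence "[:a, 1:] ^ n = (\<Sum>j\<le>n. of_nat (n choose j) * monom 1 1 ^ j * [:a:] ^ (n - j))"
    using binomial_ring[of "monom 1 1" "[:a:]" n] by simp
  also have "\<dots> = (\<Sum>j\<le>n. monom (of_nat (n choose j) * a ^ (n - j)) j)"
    by (intro sum.cong refl) (simp add: monom_power of_nat_poly poly_const_pow mult.commute[of _ "[:_:]"] smult_monom)
  finally show ?thesis by (simp add: coeff_sum coeff_monom)
qed



lemma filled_julia_inv:
  "z \<in> filled_julia P \<longleftrightarrow> poly P z \<in> filled_julia P"
proof -
  let ?f = "poly P"
  have 1: "range (\<lambda>k. (?f^^k) (?f z)) = range (\<lambda>k. (?f^^Suc k) z)"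
    by (simp add: funpow_Suc_right del: funpow.simps)
  have 2: "range (\<lambda>k. (?f^^k) z) = insert z (range (\<lambda>k. (?f^^Suc k) z))"
  proof (rule set_eqI, rule iffI)
    fix x assume "x \<in> range (\<lambda>k. (?f^^k) z)"
    then obtain k where "x = (?f^^k) z" by auto
    thus "x \<in> insert z (range (\<lambda>k. (?f^^Suc k) z))" by (cases k) auto
  next
    fix x assume "x \<in> insert z (range (\<lambda>k. (?f^^Suc k) z))"
    thus "x \<in> range (\<lambda>k. (?f^^k) z)"
      by (metis (no_types, lifting) funpow_0 insert_iff rangeE rangeI)
  qed
  show ?thesis unfolding filled_julia_def using 1 2 by simp
qed

lemma julia_inv:
  assumes "w \<in> julia_set P" shows "poly P w \<in> julia_set P"
proof -
  let ?f = "poly P" and ?K = "filled_julia P"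
  have c: "continuous_on A ?f" for A by (intro continuous_intros)
  have "?f ` ?K \<subseteq> ?K" using filled_julia_inv by blast
  hence a: "?f ` closure ?K \<subseteq> closure ?K"
    by (intro image_closure_subset[OF c]) (auto intro: closure_subset[THEN subsetD])
  have "?f ` (- ?K) \<subseteq> - ?K" using filled_julia_inv by blast
  hence b: "?f ` closure (- ?K) \<subseteq> closure (- ?K)"
    by (intro image_closure_subset[OF c]) (auto intro: closure_subset[THEN subsetD])
  show ?thesis using assms a b unfolding julia_set_def frontier_closures by blast
qed

lemma infinite_unit_sphere: "infinite (sphere (0::complex) 1)"
proof
  assume "finite (sphere (0::complex) 1)"
  moreover have "connected (sphere (0::complex) 1)" by (rule connected_sphere) simp
  ultimately have "\<exists>a. sphere (0::complex) 1 \<subseteq> {a}"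
    using connected_finite_iff_sing by fastforce
  moreover have "1 \<in> sphere (0::complex) 1" "-1 \<in> sphere (0::complex) 1" by auto
  ultimately have "(1::complex) = -1" by blast
  thus False by simp
qed



lemma unimodular_poly:
  fixes Q :: "complex poly"
  assumes d: "degree Q = n" "n \<ge> 1" and u: "\<And>u. norm u = 1 \<Longrightarrow> norm (poly Q u) = 1"
  shows "\<exists>l. Q = monom l n \<and> norm l = 1"
proof -
  define Qs where "Qs = reflect_poly (map_poly cnj Q)"
  have dm: "degree (map_poly cnj Q) = n" using d by (subst degree_map_poly) auto
  have prod: "poly Q u * poly Qs u = u ^ n" if "norm u = 1" for u
  proof -
    have u0: "u \<noteq> 0" using that by auto
    have "u * cnj u = 1" using that complex_norm_square[of u] by simp
    hence "inverse u = cnj u" by (metis inverse_unique)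
    hence ci: "cnj (inverse u) = u" by simp
    have "poly Qs u = u ^ n * cnj (poly Q u)"
      unfolding Qs_def using u0 dm ci by (simp add: poly_reflect_poly_nz)
    hence "poly Q u * poly Qs u = u ^ n * (poly Q u * cnj (poly Q u))" by (simp add: algebra_simps)
    also have "poly Q u * cnj (poly Q u) = 1"
      using u[OF that] complex_norm_square[of "poly Q u"] by simp
    finally show ?thesis by simp
  qed
  define R where "R = Q * Qs - monom 1 n"
  have "sphere 0 1 \<subseteq> {x. poly R x = 0}"
    using prod by (auto simp: R_def poly_monom)
  hence "R = 0" using infinite_unit_sphere poly_roots_finite[of R] finite_subset by blast
  hence QQ: "Q * Qs = monom 1 n" by (simp add: R_def)
  have Q0: "Q \<noteq> 0" using d by auto
  have Qs0: "Qs \<noteq> 0" using QQ by auto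
  have "degree (Q * Qs) = n" using QQ by (simp add: degree_monom_eq)
  hence "degree Qs = 0" using degree_mult_eq[OF Q0 Qs0] d by simp
  then obtain m where m: "Qs = [:m:]" by (metis degree_eq_zeroE)
  have m0: "m \<noteq> 0" using Qs0 m by auto
  have "smult m Q = monom 1 n" using QQ m by (simp add: mult.commute)
  hence "smult (1/m) (smult m Q) = smult (1/m) (monom 1 n)" by simp
  hence Qm: "Q = monom (1/m) n" using m0 by (simp add: smult_monom)
  have "norm (poly Q 1) = 1" using u by simp
  hence "norm (1/m) = 1" using Qm by (simp add: poly_monom)
  thus ?thesis using Qm by blast
qed



theorem lemma3p2:
  fixes V :: "'a set" and E :: "'a \<Rightarrow> 'a \<Rightarrow> bool" and n :: nat
  assumes "simple_graph V E"
    and "n \<ge> 2"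
    and "independence_number V E = n"
    and "\<exists>c r. r > 0 \<and> julia_set (reduced_indep_poly V E) = sphere c r"
  shows "card V = n \<and> (\<forall>u\<in>V. \<forall>v\<in>V. \<not> E u v)
         \<and> julia_set (reduced_indep_poly V E) = sphere (-1) 1"
proof -
  note g = assms(1)
  define P where "P = reduced_indep_poly V E"
  define a where "a = indep_count V E"
  obtain c r where r: "r > 0" and J: "julia_set P = sphere c r" using assms(4) P_def by blast
  have cP: "coeff P i = (if i \<le> n then of_nat (a i) else 0) - (if i = 0 then 1 else 0)" for i
    unfolding P_def reduced_indep_poly_def a_def
    by (simp add: coeff_indep_poly assms(3) coeff_1)
  have a0: "a 0 = 1" using a0[OF g] a_def by simp
  have apos: "a i \<ge> 1" if "i \<le> n" for i using a_pos[OF g] that assms(3) a_def by simp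
  define Pc where "Pc = P - [:c:]"
  have cPc: "coeff Pc i = coeff P i" if "i > 0" for i
    using that by (simp add: Pc_def coeff_pCons split: nat.split)
  have dPc: "degree Pc = n"
  proof (rule antisym)
    show "degree Pc \<le> n" by (rule degree_le) (use assms(2) cPc cP in auto)
    have "coeff Pc n \<noteq> 0" using cPc[of n] cP[of n] apos[of n] assms(2) by simp
    thus "n \<le> degree Pc" by (rule le_degree)
  qed
  define rc where "rc = complex_of_real r"
  have rc0: "rc \<noteq> 0" using r by (simp add: rc_def)
  define Q where "Q = smult (1/rc) (pcompose Pc [:c, rc:])"
  have pQ: "poly Q u = (poly P (c + rc * u) - c) / rc" for u
    by (simp add: Q_def Pc_def poly_pcompose mult.commute)
  have dQ: "degree Q = n"
    using dPc rc0 by (simp add: Q_def degree_pcompose)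
  have uQ: "norm (poly Q u) = 1" if "norm u = 1" for u
  proof -
    have "c + rc * u \<in> sphere c r" using that r by (simp add: rc_def dist_norm norm_mult)
    hence "poly P (c + rc * u) \<in> sphere c r" using julia_inv J by metis
    hence "norm (poly P (c + rc * u) - c) = r" by (simp add: dist_norm norm_minus_commute)
    thus ?thesis using r by (simp add: pQ norm_divide rc_def)
  qed
  obtain l where Ql: "Q = monom l n" and nl: "norm l = 1"
    using unimodular_poly[OF dQ _ uQ] assms(2) by auto
  define \<kappa> where "\<kappa> = rc * l / rc ^ n"
  have pP: "poly P z = c + \<kappa> * (z - c) ^ n" for z
  proof -
    have "poly Q ((z - c) / rc) = (poly P z - c) / rc" using pQ[of "(z-c)/rc"] rc0 by simp
    hence "poly P z = c + rc * poly Q ((z - c) / rc)" using rc0 by (simp add: field_simps)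
    also have "\<dots> = c + \<kappa> * (z - c) ^ n" using rc0
      by (simp add: Ql poly_monom \<kappa>_def power_divide)
    finally show ?thesis .
  qed
  define t where "t = - c"
  have PP: "P = [:c:] + smult \<kappa> ([:t, 1:] ^ n)"
    by (rule poly_eq_poly_eq_iff[THEN iffD1]) (auto simp: pP t_def)
  have cP2: "coeff P k = (if k = 0 then c else 0) + (if k \<le> n then \<kappa> * of_nat (n choose k) * t ^ (n - k) else 0)" for k
    unfolding PP by (simp add: coeff_lin_power coeff_pCons split: nat.split)
  have k_eq: "\<kappa> = of_nat (a n)" using cP[of n] cP2[of n] assms(2) by simp
  have e1: "of_nat (a 1) = \<kappa> * of_nat n * t ^ (n - 1)" using cP[of 1] cP2[of 1] assms(2) by simp
  have e0: "0 = c + \<kappa> * t ^ n" using cP[of 0] cP2[of 0] a0 by simp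
  have en: "of_nat (a (n - 1)) = \<kappa> * of_nat n * t"
  proof -
    have "n choose (n - 1) = n" using binomial_symmetric[of 1 n] assms(2) by simp
    thus ?thesis using cP[of "n-1"] cP2[of "n-1"] assms(2) by (simp add: Suc_diff_le)
  qed
  define \<tau> where "\<tau> = real (a (n - 1)) / (real n * real (a n))"
  have tau_pos: "\<tau> > 0" using apos[of n] apos[of "n-1"] assms(2) by (simp add: \<tau>_def)
  have t_tau: "t = of_real \<tau>"
    using en k_eq apos[of n] assms(2) by (simp add: \<tau>_def field_simps)
  have t0: "t \<noteq> 0" using tau_pos t_tau by simp
  have "t * 1 = t * (\<kappa> * t ^ (n - 1))" using e0 assms(2) unfolding t_def
    by (simp add: power_eq_if[of "-c" n] algebra_simps split: if_splits)
  hence kt: "\<kappa> * t ^ (n - 1) = 1" using t0 by (metis mult_left_cancel)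
  have "of_nat (a 1) = (of_nat n :: complex)" using e1 kt by (simp add: algebra_simps)
  hence cV: "card V = n" using a1[OF g] a_def by (metis of_nat_eq_iff)
  obtain S where S: "independent_set V E S" "card S = n" using indep_max[OF g] assms(3) by auto
  have fV: "finite V" using g by (simp add: simple_graph_def)
  have SV: "S = V" using S cV fV card_subset_eq[of V S] by (simp add: independent_set_def)
  have noE: "\<forall>u\<in>V. \<forall>v\<in>V. \<not> E u v" using S SV by (simp add: independent_set_def)
  have "{S. independent_set V E S \<and> card S = n} = {V}"
    using S SV cV fV card_subset_eq[of V] by (auto simp: independent_set_def)
  hence an: "a n = 1" by (simp add: a_def indep_count_def)
  have k1: "\<kappa> = 1" using k_eq an by simp
  have "complex_of_real (\<tau> ^ (n - 1)) = 1" using kt k1 t_tau by simp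
  hence "\<tau> ^ (n - 1) = 1 ^ (n - 1)" by (metis of_real_eq_1_iff power_one)
  hence "\<tau> = 1" using power_eq_iff_eq_base[of "n-1" \<tau> 1] tau_pos assms(2) by simp
  hence cm1: "c = -1" using t_tau t_def by (metis minus_minus of_real_1)
  have "norm \<kappa> = r / r ^ n" using nl r by (simp add: \<kappa>_def rc_def norm_divide norm_mult norm_power)
  hence "r / r ^ n = 1" using k1 r by simp
  hence "r * 1 = r * r ^ (n - 1)" using r assms(2)
    by (simp add: power_eq_if[of r n] field_simps split: if_splits)
  hence "r ^ (n - 1) = 1 ^ (n - 1)" using r by simp
  hence "r = 1" using power_eq_iff_eq_base[of "n-1" r 1] r assms(2) by simp
  thus ?thesis using cV noE J cm1 P_def by simp
qed

end
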